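(* Let $0<a\le 1$ and let $z\in\mathbb{C}$ with $0<|z|\le 1$. For $\sigma>1$ and $t\in\mathbb{R}$ put $$f_{\sigma,a,z}(t):=\Gamma(\sigma+{\rm i}t)\,\Phi(\sigma+{\rm i}t,a,z),\qquad F_{\sigma,a,z}(t):=\frac{f_{\sigma,a,z}(t)}{f_{\sigma,a,z}(0)}.$$ Then $F_{\sigma,a,z}$ is the characteristic function of a probability measure on $\mathbb{R}$ for all $\sigma>1$ if and only if $z\in[-1,1]$ (and $z\neq 0$). Moreover, in that case the associated probability measure is absolutely continuous with density $$P_{\sigma,a,z}(y)=\frac{e^{y\sigma}\exp\bigl((1-a)e^{y}\bigr)}{f_{\sigma,a,z}(0)\,\bigl(\exp(e^{y})-z\bigr)},\qquad y\in\mathbb{R}.$$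
   Context: For $0<a\le1$, $s=\sigma+{\rm i}t\in\mathbb{C}$ with $\sigma>1$ and $z\in\mathbb{C}$ with $0<|z|\le 1$, the Hurwitz–Lerch zeta function is $\Phi(s,a,z):=\sum_{n=0}^\infty z^n (n+a)^{-s}$. The characteristic function of a probability measure $\mu$ on $\mathbb{R}$ is $\widehat\mu(t)=\int_{\mathbb{R}} e^{{\rm i}ty}\mu(dy)$. *)

theory Defs
  imports "HOL-Probability.Probability"
begin

definition hurwitz_lerch :: "complex \<Rightarrow> real \<Rightarrow> complex \<Rightarrow> complex" where
  "hurwitz_lerch s a z = (\<Sum>n. z ^ n / (complex_of_real (real n + a)) powr s)"

definition f_GP :: "real \<Rightarrow> real \<Rightarrow> complex \<Rightarrow> real \<Rightarrow> complex" where
  "f_GP \<sigma> a z t = Gamma (Complex \<sigma> t) * hurwitz_lerch (Complex \<sigma> t) a z"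

definition F_GP :: "real \<Rightarrow> real \<Rightarrow> complex \<Rightarrow> real \<Rightarrow> complex" where
  "F_GP \<sigma> a z t = f_GP \<sigma> a z t / f_GP \<sigma> a z 0"

text \<open>Density P(y); for real z all quantities are real, we take the real part.\<close>
definition P_GP :: "real \<Rightarrow> real \<Rightarrow> complex \<Rightarrow> real \<Rightarrow> real" where
  "P_GP \<sigma> a z y = Re (complex_of_real (exp (y * \<sigma>) * exp ((1 - a) * exp y))
      / (f_GP \<sigma> a z 0 * (complex_of_real (exp (exp y)) - z)))"

end

theory Submission
  imports Defs
begin

lemma lebesgue_to_lborel:
  fixes f :: "real \<Rightarrow> 'b::euclidean_space"
  assumes "f absolutely_integrable_on S" "S \<in> sets borel" "continuous_on S f"
  shows "set_integrable lborel S f"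
proof -
  have m: "(\<lambda>x. indicator S x *\<^sub>R f x) \<in> borel_measurable borel"
    using assms by (intro borel_measurable_continuous_on_indicator)
  show ?thesis using assms(1) m unfolding set_integrable_def
    by (subst (asm) integrable_completion) auto
qed

lemma gamma_y:
  fixes s :: complex and b :: real
  assumes s: "Re s > 0" and b: "b > 0"
  shows "integrable lborel (\<lambda>y. exp (s * of_real y) * of_real (exp (- b * exp y)))"
    "(LINT y|lborel. exp (s * of_real y) * of_real (exp (- b * exp y))) = Gamma s * exp (- s * of_real (ln b))"
proof -
  define g where "g x = ln x - ln b" for x :: real
  define F where "F = (\<lambda>y::real. exp (s * of_real y) * of_real (exp (- b * exp y)))"
  define Fr where "Fr y = exp (Re s * y) * exp (- b * exp y)" for y
  define hc where "hc = (\<lambda>x::real. of_real x powr (s - 1) / of_real (exp x) :: complex)"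
  have hcint: "hc absolutely_integrable_on {0<..}"
    using absolutely_integrable_Gamma_integral'[OF s] by (simp add: hc_def)
  have hcint': "set_integrable lborel {0<..} hc"
    by (rule lebesgue_to_lborel[OF hcint]) (auto simp: hc_def intro!: continuous_intros)
  have key: "F (g x) * of_real (1/x) = exp (- s * of_real (ln b)) * hc x" if x: "x > 0" for x
  proof -
    have "F (g x) = exp (s * of_real (ln x)) * exp (- s * of_real (ln b)) * of_real (exp (-x))"
      using x b by (simp add: F_def g_def exp_diff exp_add [symmetric] algebra_simps)
    moreover have "hc x = exp ((s - 1) * of_real (ln x)) / of_real (exp x)"
      using x by (simp add: hc_def powr_def Ln_of_real)
    moreover have "exp (s * of_real (ln x)) * of_real (1/x) = exp ((s - 1) * of_real (ln x))"
      using x by (simp add: algebra_simps exp_diff exp_of_real)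
    ultimately show ?thesis
    proof -
      assume h1: "F (g x) = exp (s * of_real (ln x)) * exp (- s * of_real (ln b)) * of_real (exp (-x))"
        and h2: "hc x = exp ((s - 1) * of_real (ln x)) / of_real (exp x)"
        and h3: "exp (s * of_real (ln x)) * of_real (1/x) = exp ((s - 1) * of_real (ln x))"
      have "F (g x) * of_real (1/x) = exp (- s * of_real (ln b)) * ((exp (s * of_real (ln x)) * of_real (1/x)) / of_real (exp x))"
        unfolding h1 by (simp add: exp_minus divide_inverse)
      also have "\<dots> = exp (- s * of_real (ln b)) * hc x" unfolding h3 h2 ..
      finally show ?thesis .
    qed
  qed
  have keyr: "Fr (g x) * (1/x) = exp (- Re s * ln b) * norm (hc x)" if x: "x > 0" for x
  proof -
    have "norm (F (g x) * of_real (1/x)) = Fr (g x) * (1/x)"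
      using x by (simp add: F_def Fr_def norm_mult norm_divide norm_exp_eq_Re)
    thus ?thesis using key[OF x] by (simp add: norm_mult)
  qed
  have keyr': "Fr (g x) / x = exp (- (Re s * ln b)) * cmod (hc x)" if "x > 0" for x
    using keyr[OF that] by simp
  have key': "F (g x) / of_real x = exp (- (s * of_real (ln b))) * hc x" if "x > 0" for x
    using key[OF that] by simp
  have ei0: "einterval 0 \<infinity> = {0<..}" by (simp add: zero_ereal_def)
  have eiU: "einterval (-\<infinity>) \<infinity> = UNIV" by simp
  have dg: "DERIV g x :> 1 / x" if "0 < x" for x
    using that unfolding g_def by (auto intro!: derivative_eq_intros)
  have limA: "((ereal \<circ> g \<circ> real_of_ereal) \<longlongrightarrow> - \<infinity>) (at_right 0)"
  proof -
    have "filterlim g at_bot (at_right 0)"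
    proof -
      have "g = (\<lambda>x. (- ln b) + ln x)" by (auto simp: g_def fun_eq_iff)
      thus ?thesis using filterlim_tendsto_add_at_bot_iff[OF tendsto_const, of "- ln b" ln "at_right 0"] ln_at_0 by simp
    qed
    thus ?thesis by (simp add: zero_ereal_def ereal_tendsto_simps)
  qed
  have limB: "((ereal \<circ> g \<circ> real_of_ereal) \<longlongrightarrow> \<infinity>) (at_left \<infinity>)"
  proof -
    have "filterlim g at_top at_top"
    proof -
      have "g = (\<lambda>x. (- ln b) + ln x)" by (auto simp: g_def fun_eq_iff)
      thus ?thesis using filterlim_tendsto_add_at_top[OF tendsto_const ln_at_top, of "- ln b"] by simp
    qed
    thus ?thesis by (simp add: ereal_tendsto_simps)
  qed
  have intr1: "set_integrable lborel (einterval 0 \<infinity>) (\<lambda>x. Fr (g x) * (1/x))"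
  proof -
    have "set_integrable lborel {0<..} (\<lambda>x. exp (- Re s * ln b) * norm (hc x))"
      using set_integrable_norm[OF hcint'] by simp
    thus ?thesis unfolding ei0 by (rule set_integrable_cong[THEN iffD1, rotated -1]) (auto simp: keyr')
  qed
  have Frint: "set_integrable lborel (einterval (-\<infinity>) \<infinity>) Fr"
    by (rule interval_integral_substitution_nonneg(1)[where A="-\<infinity>" and B="\<infinity>" and a=0 and b=\<infinity>
          and g=g and g'="\<lambda>x. 1/x", OF _ _ _ _ _ _ limA limB intr1])
       (auto simp: zero_ereal_def dg Fr_def intro!: continuous_intros)
  have Fint: "integrable lborel F"
  proof (rule Bochner_Integration.integrable_bound)
    show "integrable lborel Fr" using Frint by (simp add: set_integrable_def)
    show "F \<in> borel_measurable lborel" unfolding F_def by measurable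
    show "AE x in lborel. norm (F x) \<le> norm (Fr x)"
      by (auto simp: F_def Fr_def norm_mult norm_exp_eq_Re)
  qed
  thus "integrable lborel (\<lambda>y. exp (s * of_real y) * of_real (exp (- b * exp y)))"
    by (simp add: F_def)
  have Fint': "integrable lborel (\<lambda>x. exp (s * of_real x) * of_real (exp (- (b * exp x))))"
    using Fint by (simp add: F_def)
  have intc1: "set_integrable lborel (einterval 0 \<infinity>) (\<lambda>x. (1/x) *\<^sub>R F (g x))"
  proof -
    have "set_integrable lborel {0<..} (\<lambda>x. exp (- s * of_real (ln b)) * hc x)"
      using hcint' by simp
    thus ?thesis unfolding ei0 by (rule set_integrable_cong[THEN iffD1, rotated -1])
      (auto simp: key' scaleR_conv_of_real mult.commute)
  qed
  have "(LBINT x=-\<infinity>..\<infinity>. F x) = (LBINT x=0..\<infinity>. (1/x) *\<^sub>R F (g x))"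
    by (rule interval_integral_substitution_integrable[where A="-\<infinity>" and B="\<infinity>" and a=0 and b=\<infinity>
          and g=g and g'="\<lambda>x. 1/x", OF _ _ _ _ _ limA limB intc1])
       (auto simp: zero_ereal_def dg F_def set_integrable_def Fint' intro!: continuous_intros)
  also have "\<dots> = (LBINT x=0..\<infinity>. exp (- s * of_real (ln b)) * hc x)"
    by (rule interval_integral_cong) (auto simp: zero_ereal_def key' scaleR_conv_of_real mult.commute einterval_iff)
  also have "\<dots> = exp (- s * of_real (ln b)) * (LINT x:{0<..}|lborel. hc x)"
    by (simp add: interval_lebesgue_integral_def ei0)
  also have "(LINT x:{0<..}|lborel. hc x) = Gamma s"
    using set_borel_integral_eq_integral(2)[OF hcint'] Gamma_integral_complex'[OF s]
    by (simp add: hc_def integral_unique)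
  finally show "(LINT y|lborel. exp (s * of_real y) * of_real (exp (- b * exp y))) = Gamma s * exp (- s * of_real (ln b))"
    by (simp add: interval_lebesgue_integral_def set_lebesgue_integral_def F_def mult.commute)
qed
lemma pw_exp_inv: fixes s :: complex and b :: real shows "b > 0 \<Longrightarrow> exp (- s * of_real (ln b)) = inverse (of_real b powr s)"
  by (simp add: powr_def Ln_of_real exp_minus)

lemma summ_powr:
  assumes "\<sigma> > 1" "a > 0"
  shows "summable (\<lambda>n. (real n + a) powr (-\<sigma>))"
proof (rule summable_comparison_test_ev)
  show "summable (\<lambda>n. real n powr (-\<sigma>))" using assms by (simp add: summable_real_powr_iff)
  show "\<forall>\<^sub>F n in sequentially. norm ((real n + a) powr (-\<sigma>)) \<le> real n powr (-\<sigma>)"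
    using eventually_gt_at_top[of 0]
  proof eventually_elim
    case (elim n)
    thus ?case using assms by (auto intro!: powr_mono2')
  qed
qed

lemma series_int:
  fixes s z :: complex and a :: real
  assumes s: "1 < Re s" and a: "0 < a" and z: "cmod z \<le> 1"
  defines "H \<equiv> \<lambda>y::real. exp (s * of_real y) * of_real (exp ((1 - a) * exp y)) / (of_real (exp (exp y)) - z)"
  shows "integrable lborel H" "integral\<^sup>L lborel H = Gamma s * hurwitz_lerch s a z"
proof -
  define T where "T = (\<lambda>n::nat. \<lambda>y::real. z^n * (exp (s * of_real y) * of_real (exp (- (real n + a) * exp y))))"
  have na: "real n + a > 0" for n using a by simp
  have Tint: "integrable lborel (T n)" for n
    using gamma_y(1)[of s "real n + a"] s na unfolding T_def by (intro integrable_mult_right) auto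
  have Tintval: "integral\<^sup>L lborel (T n) = Gamma s * (z^n * inverse (of_real (real n + a) powr s))" for n
  proof -
    have G: "integral\<^sup>L lborel (\<lambda>y. exp (s * of_real y) * of_real (exp (- (real n + a) * exp y))) = Gamma s * exp (- s * of_real (ln (real n + a)))"
      by (rule gamma_y(2)) (use s na in auto)
    show ?thesis unfolding T_def integral_mult_right_zero G pw_exp_inv[OF na] by (simp only: mult_ac)
  qed
  have normT: "norm (T n y) = cmod z ^ n * (exp (Re s * y) * exp (- (real n + a) * exp y))" for n y
    by (simp add: T_def norm_mult norm_power norm_exp_eq_Re)
  have rint: "integral\<^sup>L lborel (\<lambda>y. exp (Re s * y) * exp (- (real n + a) * exp y)) = Gamma (Re s) * (real n + a) powr (- Re s)" for n
  proof -
    have eq: "(\<lambda>y. exp (complex_of_real (Re s) * of_real y) * of_real (exp (- (real n + a) * exp y)))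
       = (\<lambda>y. complex_of_real (exp (Re s * y) * exp (- (real n + a) * exp y)))"
      by (auto simp: fun_eq_iff exp_of_real simp flip: of_real_mult)
    have "complex_of_real (integral\<^sup>L lborel (\<lambda>y. exp (Re s * y) * exp (- (real n + a) * exp y)))
        = Gamma (complex_of_real (Re s)) * exp (- complex_of_real (Re s) * of_real (ln (real n + a)))"
    proof -
      have G: "integral\<^sup>L lborel (\<lambda>y. exp (complex_of_real (Re s) * of_real y) * of_real (exp (- (real n + a) * exp y)))
          = Gamma (complex_of_real (Re s)) * exp (- complex_of_real (Re s) * of_real (ln (real n + a)))"
        by (rule gamma_y(2)) (use s na in auto)
      thus ?thesis unfolding eq integral_complex_of_real .
    qed
    also have "\<dots> = complex_of_real (Gamma (Re s) * (real n + a) powr (- Re s))"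
      using na[of n] by (simp add: Gamma_complex_of_real powr_def exp_of_real flip: of_real_mult of_real_minus)
    finally show ?thesis by (simp only: of_real_eq_iff)
  qed
  have normTint: "integral\<^sup>L lborel (\<lambda>y. norm (T n y)) = cmod z ^ n * (Gamma (Re s) * (real n + a) powr (- Re s))" for n
    unfolding normT integral_mult_right_zero rint ..
  have Gpos: "Gamma (Re s) > 0" using s by (intro Gamma_real_pos) auto
  have summ_norm_int: "summable (\<lambda>n. integral\<^sup>L lborel (\<lambda>y. norm (T n y)))"
  proof (rule summable_comparison_test_ev)
    show "summable (\<lambda>n. Gamma (Re s) * (real n + a) powr (- Re s))"
      using summ_powr[OF s a] by (rule summable_mult)
    show "\<forall>\<^sub>F n in sequentially. norm (integral\<^sup>L lborel (\<lambda>y. norm (T n y))) \<le> Gamma (Re s) * (real n + a) powr (- Re s)"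
    proof (intro always_eventually allI)
      fix n
      have "cmod z ^ n \<le> 1" using z by (simp add: power_le_one)
      thus "norm (integral\<^sup>L lborel (\<lambda>y. norm (T n y))) \<le> Gamma (Re s) * (real n + a) powr (- Re s)"
        unfolding normTint using Gpos by (simp add: abs_mult mult_left_le_one_le)
    qed
  qed
  have Tn_eq: "T n y = (exp (s * of_real y) * of_real (exp (- a * exp y))) * (z * of_real (exp (- exp y)))^n" for n y
  proof -
    have e: "exp (- (real n + a) * exp y) = exp (- a * exp y) * exp (- exp y) ^ n"
      by (simp add: exp_of_nat_mult[symmetric] exp_add[symmetric] algebra_simps)
    show ?thesis unfolding T_def e by (simp add: power_mult_distrib mult_ac)
  qed
  have qlt: "norm (z * of_real (exp (- exp y))) < 1" for y :: real
  proof -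
    have "exp (- exp y) < 1" by simp
    hence "cmod z * exp (- exp y) < 1" using z by (metis mult_le_one less_le not_le exp_ge_zero order_trans mult_left_le_one_le norm_ge_zero) 
    thus ?thesis by (simp add: norm_mult)
  qed
  have summ_pt: "summable (\<lambda>n. norm (T n y))" for y
  proof -
    have "summable (\<lambda>n. norm (exp (s * of_real y) * of_real (exp (- a * exp y))) * norm (z * of_real (exp (- exp y))) ^ n)"
      using qlt[of y] by (intro summable_mult summable_geometric) auto
    thus ?thesis unfolding Tn_eq by (simp add: norm_mult norm_power)
  qed
  have sumT: "(\<lambda>n. T n y) sums H y" for y
  proof -
    define q where "q = z * of_real (exp (- exp y))"
    define c where "c = exp (s * of_real y) * of_real (exp (- a * exp y))"
    have "(\<lambda>n. c * q^n) sums (c * (1 / (1 - q)))"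
      using qlt[of y] unfolding q_def by (intro sums_mult geometric_sums) auto
    moreover have "c * (1 / (1 - q)) = H y"
    proof -
      have E: "exp (exp y) > 1" by simp
      have ne: "of_real (exp (exp y)) - z \<noteq> 0"
      proof
        assume "of_real (exp (exp y)) - z = 0"
        hence "cmod z = exp (exp y)" by (metis eq_iff_diff_eq_0 norm_of_real abs_of_pos exp_gt_zero)
        thus False using z E by simp
      qed
      define E where "E = complex_of_real (exp (exp y))"
      have E0: "E \<noteq> 0" by (simp add: E_def)
      have "1 - q = (E - z) / E"
        unfolding q_def E_def by (simp add: field_simps exp_minus)
      hence h1: "1 / (1 - q) = E / (E - z)" using E0 ne[folded E_def] by simp
      have h2: "complex_of_real (exp ((1 - a) * exp y)) = complex_of_real (exp (- a * exp y)) * E"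
        unfolding E_def by (simp add: exp_add[symmetric] algebra_simps flip: of_real_mult)
      show ?thesis unfolding h1 H_def h2 c_def by (simp add: E_def mult_ac)
    qed
    ultimately show ?thesis unfolding Tn_eq c_def q_def by simp
  qed
  have Heq: "H = (\<lambda>y. \<Sum>n. T n y)"
    using sumT by (auto simp: fun_eq_iff sums_unique)
  show "integrable lborel H" unfolding Heq
    by (rule integrable_suminf[OF Tint AE_I2[OF summ_pt] summ_norm_int])
  have "integral\<^sup>L lborel H = (\<Sum>n. integral\<^sup>L lborel (T n))" unfolding Heq
    by (rule integral_suminf[OF Tint AE_I2[OF summ_pt] summ_norm_int])
  also have "\<dots> = (\<Sum>n. Gamma s * (z^n * inverse (of_real (real n + a) powr s)))"
    by (simp add: Tintval)
  also have "\<dots> = Gamma s * hurwitz_lerch s a z"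
  proof (cases "Gamma s = 0")
    case True thus ?thesis by simp
  next
    case False
    have "summable (\<lambda>n. integral\<^sup>L lborel (T n))"
      by (rule summable_integral[OF Tint AE_I2[OF summ_pt] summ_norm_int])
    hence "summable (\<lambda>n. Gamma s * (z^n * inverse (of_real (real n + a) powr s)))" by (simp add: Tintval)
    hence "summable (\<lambda>n. z^n * inverse (of_real (real n + a) powr s))" using False by (simp add: summable_cmult_iff)
    thus ?thesis by (simp add: suminf_mult hurwitz_lerch_def divide_inverse)
  qed
  finally show "integral\<^sup>L lborel H = Gamma s * hurwitz_lerch s a z" .
qed

definition hGP :: "real \<Rightarrow> real \<Rightarrow> complex \<Rightarrow> real \<Rightarrow> complex" where
  "hGP \<sigma> a z y = complex_of_real (exp (\<sigma> * y) * exp ((1 - a) * exp y)) / (complex_of_real (exp (exp y)) - z)"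

lemma fchar:
  assumes s: "1 < \<sigma>" and a: "0 < a" and z: "cmod z \<le> 1"
  shows "integrable lborel (\<lambda>y. hGP \<sigma> a z y * iexp (t * y))"
    "(CLINT y|lborel. hGP \<sigma> a z y * iexp (t * y)) = f_GP \<sigma> a z t"
proof -
  have eq: "(\<lambda>y::real. exp (Complex \<sigma> t * of_real y) * of_real (exp ((1 - a) * exp y)) / (of_real (exp (exp y)) - z))
     = (\<lambda>y. hGP \<sigma> a z y * iexp (t * y))"
  proof
    fix y :: real
    have "exp (Complex \<sigma> t * of_real y) = of_real (exp (\<sigma> * y)) * iexp (t * y)"
      by (simp add: Complex_eq algebra_simps exp_add exp_of_real flip: of_real_mult)
    thus "exp (Complex \<sigma> t * of_real y) * of_real (exp ((1 - a) * exp y)) / (of_real (exp (exp y)) - z) = hGP \<sigma> a z y * iexp (t * y)"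
      by (simp add: hGP_def)
  qed
  have "1 < Re (Complex \<sigma> t)" using s by simp
  note S = series_int[OF this a z]
  show "integrable lborel (\<lambda>y. hGP \<sigma> a z y * iexp (t * y))" using S(1) unfolding eq .
  show "(CLINT y|lborel. hGP \<sigma> a z y * iexp (t * y)) = f_GP \<sigma> a z t" using S(2) unfolding eq f_GP_def .
qed

lemma alg:
  fixes z f0 :: complex and c1 c2 E1 E2 :: real
  assumes "c1 \<noteq> 0" "c2 \<noteq> 0" "E1 \<noteq> E2" "f0 \<noteq> 0" "of_real E1 \<noteq> z" "of_real E2 \<noteq> z"
   "Im (of_real c1 / (of_real E1 - z) / f0) = 0" "Im (of_real c2 / (of_real E2 - z) / f0) = 0"
  shows "z \<in> \<real>"
proof -
  have im: "Im ((of_real E - z) * f0) = 0" if "c \<noteq> 0" "of_real E \<noteq> z" "Im (of_real c / (of_real E - z) / f0) = 0" for c E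
  proof -
    define w where "w = (of_real E - z) * f0"
    have w0: "w \<noteq> 0" using that assms(4) by (simp add: w_def)
    have "of_real c / (of_real E - z) / f0 = of_real c * inverse w" by (simp add: w_def field_simps)
    hence "Im (of_real c * inverse w) = 0" using that by simp
    hence "c * Im (inverse w) = 0" by simp
    hence "Im (inverse w) = 0" using that by simp
    moreover have "Im (inverse w) = - Im w / (cmod w)^2" using Im_divide'[of 1 w] by (simp add: inverse_eq_divide)
    ultimately have "Im w = 0" using w0 by auto
    thus ?thesis by (simp add: w_def)
  qed
  have i1: "E1 * Im f0 - Im (z * f0) = 0" using im[OF assms(1) assms(5) assms(7)] by (simp add: algebra_simps)
  have i2: "E2 * Im f0 - Im (z * f0) = 0" using im[OF assms(2) assms(6) assms(8)] by (simp add: algebra_simps)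
  have "(E1 - E2) * Im f0 = 0" using i1 i2 by (simp add: algebra_simps)
  hence imf: "Im f0 = 0" using assms(3) by simp
  hence "Re f0 \<noteq> 0" using assms(4) complex_eq_iff by force
  moreover have "Im z * Re f0 = 0" using i1 imf by simp
  ultimately show ?thesis by (simp add: complex_is_Real_iff)
qed


lemma density_rd:
  fixes p :: "real \<Rightarrow> real"
  assumes p: "integrable lborel p" "\<And>y. 0 \<le> p y" "integral\<^sup>L lborel p = 1"
  shows "real_distribution (density lborel (\<lambda>y. ennreal (p y)))"
    "char (density lborel (\<lambda>y. ennreal (p y))) t = (CLINT y|lborel. of_real (p y) * iexp (t * y))"
proof -
  have [measurable]: "p \<in> borel_measurable lborel" using p(1) by (rule borel_measurable_integrable)
  have "emeasure (density lborel (\<lambda>y. ennreal (p y))) UNIV = (\<integral>\<^sup>+y. ennreal (p y) \<partial>lborel)"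
    by (simp add: emeasure_density)
  also have "\<dots> = ennreal (integral\<^sup>L lborel p)"
    using p by (intro nn_integral_eq_integral) auto
  also have "\<dots> = 1" using p by simp
  finally have "emeasure (density lborel (\<lambda>y. ennreal (p y))) (space (density lborel (\<lambda>y. ennreal (p y)))) = 1"
    by simp
  hence "prob_space (density lborel (\<lambda>y. ennreal (p y)))" by (rule prob_spaceI)
  thus "real_distribution (density lborel (\<lambda>y. ennreal (p y)))"
    by (intro real_distribution.intro real_distribution_axioms.intro) auto
  show "char (density lborel (\<lambda>y. ennreal (p y))) t = (CLINT y|lborel. of_real (p y) * iexp (t * y))"
    unfolding char_def using p
    by (subst integral_density) (auto simp: scaleR_conv_of_real)
qed

lemma pos_integral:
  fixes p :: "real \<Rightarrow> real"
  assumes "integrable lborel p" "\<And>y. 0 < p y"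
  shows "integral\<^sup>L lborel p > 0"
proof -
  have "integral\<^sup>L lborel p \<ge> 0" using assms by (intro integral_nonneg_AE) (auto intro: less_imp_le)
  moreover have "integral\<^sup>L lborel p \<noteq> 0"
  proof
    assume "integral\<^sup>L lborel p = 0"
    hence "AE x in lborel. p x = 0" using assms
      by (subst integral_nonneg_eq_0_iff_AE[symmetric]) (auto intro: less_imp_le)
    hence "AE x::real in lborel. False" by (rule eventually_mono) (metis assms(2) less_irrefl)
    hence "ae_filter (lborel::real measure) = bot" using trivial_limit_def by blast
    hence "emeasure (lborel::real measure) (space lborel) = 0" by (simp only: ae_filter_eq_bot_iff)
    thus False by simp
  qed
  ultimately show ?thesis by simp
qed


lemma int_iexp:
  fixes w :: "real \<Rightarrow> real"
  assumes "integrable lborel w"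
  shows "integrable lborel (\<lambda>y. complex_of_real (w y) * iexp (t * y))"
proof (rule Bochner_Integration.integrable_bound)
  show "integrable lborel w" by fact
  have [measurable]: "w \<in> borel_measurable lborel" using assms by (rule borel_measurable_integrable)
  show "(\<lambda>y. complex_of_real (w y) * iexp (t * y)) \<in> borel_measurable lborel" by measurable
  show "AE y in lborel. norm (complex_of_real (w y) * iexp (t * y)) \<le> norm (w y)"
    by (auto simp: norm_mult)
qed

lemma zero_fourier:
  fixes v :: "real \<Rightarrow> real"
  assumes v: "integrable lborel v"
    and F: "\<And>t. (CLINT y|lborel. complex_of_real (v y) * iexp (t * y)) = 0"
  shows "AE y in lborel. v y = 0"
proof -
  define vp where "vp = (\<lambda>y. max (v y) 0)"
  define vm where "vm = (\<lambda>y. max (- v y) 0)"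
  have vpi: "integrable lborel vp" unfolding vp_def using v by auto
  have vmi: "integrable lborel vm" unfolding vm_def using v by auto
  have [measurable]: "vp \<in> borel_measurable lborel" "vm \<in> borel_measurable lborel"
    using vpi vmi by (auto intro: borel_measurable_integrable)
  have vpn: "0 \<le> vp y" "0 \<le> vm y" for y by (auto simp: vp_def vm_def)
  have eqF: "(CLINT y|lborel. complex_of_real (vp y) * iexp (t * y)) = (CLINT y|lborel. complex_of_real (vm y) * iexp (t * y))" for t
  proof -
    have "(CLINT y|lborel. complex_of_real (v y) * iexp (t * y))
       = (CLINT y|lborel. complex_of_real (vp y) * iexp (t * y) - complex_of_real (vm y) * iexp (t * y))"
      by (rule Bochner_Integration.integral_cong) (auto simp: vp_def vm_def max_def algebra_simps)
    also have "\<dots> = (CLINT y|lborel. complex_of_real (vp y) * iexp (t * y)) - (CLINT y|lborel. complex_of_real (vm y) * iexp (t * y))"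
      by (rule Bochner_Integration.integral_diff[OF int_iexp[OF vpi] int_iexp[OF vmi]])
    finally show ?thesis using F[of t] by simp
  qed
  have "complex_of_real (integral\<^sup>L lborel vp) = complex_of_real (integral\<^sup>L lborel vm)"
    using eqF[of 0] by simp
  hence m: "integral\<^sup>L lborel vp = integral\<^sup>L lborel vm" by (simp only: of_real_eq_iff)
  define m where "m = integral\<^sup>L lborel vp"
  have m0: "m \<ge> 0" unfolding m_def using vpn by (intro integral_nonneg_AE) auto
  have "AE y in lborel. vp y = vm y"
  proof (cases "m = 0")
    case True
    have "AE y in lborel. vp y = 0" using True vpi vpn unfolding m_def
      by (subst integral_nonneg_eq_0_iff_AE[symmetric]) auto
    moreover have "AE y in lborel. vm y = 0" using True vmi vpn m unfolding m_def
      by (subst integral_nonneg_eq_0_iff_AE[symmetric]) auto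
    ultimately show ?thesis by eventually_elim simp
  next
    case False
    hence mpos: "m > 0" using m0 by simp
    have p1: "integrable lborel (\<lambda>y. vp y / m)" "\<And>y. 0 \<le> vp y / m" "integral\<^sup>L lborel (\<lambda>y. vp y / m) = 1"
      using vpi vpn mpos by (auto simp: m_def)
    have p2: "integrable lborel (\<lambda>y. vm y / m)" "\<And>y. 0 \<le> vm y / m" "integral\<^sup>L lborel (\<lambda>y. vm y / m) = 1"
      using vmi vpn mpos m by (auto simp: m_def)
    have ch: "(CLINT y|lborel. complex_of_real (w y / m) * iexp (t * y)) = (CLINT y|lborel. complex_of_real (w y) * iexp (t * y)) / of_real m" for w t
    proof -
      have "(\<lambda>y. complex_of_real (w y / m) * iexp (t * y)) = (\<lambda>y. complex_of_real (w y) * iexp (t * y) / of_real m)"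
        by (auto simp: fun_eq_iff)
      thus ?thesis by simp
    qed
    have "density lborel (\<lambda>y. ennreal (vp y / m)) = density lborel (\<lambda>y. ennreal (vm y / m))"
    proof (rule Levy_uniqueness)
      show "real_distribution (density lborel (\<lambda>y. ennreal (vp y / m)))" by (rule density_rd(1)[OF p1])
      show "real_distribution (density lborel (\<lambda>y. ennreal (vm y / m)))" by (rule density_rd(1)[OF p2])
      show "char (density lborel (\<lambda>y. ennreal (vp y / m))) = char (density lborel (\<lambda>y. ennreal (vm y / m)))"
        by (rule ext) (simp only: density_rd(2)[OF p1] density_rd(2)[OF p2] ch eqF)
    qed
    hence "AE y in lborel. ennreal (vp y / m) = ennreal (vm y / m)"
      by (subst (asm) sigma_finite_measure.density_unique_iff[OF sigma_finite_lborel]) auto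
    thus ?thesis
    proof eventually_elim
      case (elim y)
      thus ?case using vpn[of y] mpos by (simp add: ennreal_inj field_simps)
    qed
  qed
  thus ?thesis by eventually_elim (auto simp: vp_def vm_def max_def split: if_splits)
qed


lemma ae_ex:
  assumes "AE y in lborel. P (y::real)"
  shows "\<exists>y. P y"
proof (rule ccontr)
  assume "\<not> (\<exists>y. P y)"
  hence "AE x::real in lborel. False" using assms by (rule_tac eventually_mono) auto
  hence "ae_filter (lborel::real measure) = bot" using trivial_limit_def by blast
  hence "emeasure (lborel::real measure) (space lborel) = 0" by (simp only: ae_filter_eq_bot_iff)
  thus False by simp
qed

lemma real_case:
  assumes a: "0 < a" "a \<le> 1" and z: "cmod z \<le> 1" "z \<in> \<real>" and s: "1 < \<sigma>"
  shows "(\<forall>y. 0 \<le> P_GP \<sigma> a z y) \<and> real_distribution (density lborel (\<lambda>y. ennreal (P_GP \<sigma> a z y)))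
          \<and> char (density lborel (\<lambda>y. ennreal (P_GP \<sigma> a z y))) = F_GP \<sigma> a z
          \<and> (\<forall>\<mu>. real_distribution \<mu> \<and> char \<mu> = F_GP \<sigma> a z \<longrightarrow> \<mu> = density lborel (\<lambda>y. ennreal (P_GP \<sigma> a z y)))"
proof -
  obtain r where zr: "z = of_real r" using z(2) Reals_cases by blast
  have r1: "r \<le> 1" using z(1) zr by simp
  define hr where "hr = (\<lambda>y. exp (\<sigma> * y) * exp ((1 - a) * exp y) / (exp (exp y) - r))"
  have hrpos: "hr y > 0" for y
  proof -
    have "exp (exp y) > 1" by simp
    hence "exp (exp y) - r > 0" using r1 by linarith
    thus ?thesis unfolding hr_def by (intro divide_pos_pos mult_pos_pos) auto
  qed
  have hGPr: "hGP \<sigma> a z y = complex_of_real (hr y)" for y by (simp add: hGP_def hr_def zr)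
  have ie: "(\<lambda>y. hGP \<sigma> a z y * iexp (0 * y)) = (\<lambda>y. complex_of_real (hr y))"
    by (simp add: hGPr)
  have hri: "integrable lborel hr"
    using fchar(1)[OF s a(1) z(1), of 0] unfolding ie by (simp add: complex_of_real_integrable_eq)
  have f0: "f_GP \<sigma> a z 0 = complex_of_real (integral\<^sup>L lborel hr)"
    using fchar(2)[OF s a(1) z(1), of 0] unfolding ie by simp
  define I where "I = integral\<^sup>L lborel hr"
  have Ipos: "I > 0" unfolding I_def by (rule pos_integral[OF hri hrpos])
  define p where "p = (\<lambda>y. hr y / I)"
  have P: "P_GP \<sigma> a z y = p y" for y
  proof -
    have "complex_of_real (exp (y * \<sigma>) * exp ((1 - a) * exp y)) / (f_GP \<sigma> a z 0 * (complex_of_real (exp (exp y)) - z))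
       = complex_of_real (p y)"
      unfolding f0 I_def[symmetric] unfolding zr p_def hr_def
      by (simp add: divide_divide_eq_left ac_simps)
    thus ?thesis unfolding P_GP_def by simp
  qed
  have pp: "integrable lborel p" "\<And>y. 0 \<le> p y" "integral\<^sup>L lborel p = 1"
    using hri hrpos Ipos unfolding p_def by (auto simp: I_def intro: less_imp_le)
  have dens: "(\<lambda>y. ennreal (P_GP \<sigma> a z y)) = (\<lambda>y. ennreal (p y))" by (simp add: P)
  have rd: "real_distribution (density lborel (\<lambda>y. ennreal (p y)))" by (rule density_rd(1)[OF pp])
  have ch: "char (density lborel (\<lambda>y. ennreal (p y))) = F_GP \<sigma> a z"
  proof
    fix t
    have "(\<lambda>y. complex_of_real (p y) * iexp (t * y)) = (\<lambda>y. hGP \<sigma> a z y * iexp (t * y) / complex_of_real I)"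
      by (auto simp: fun_eq_iff p_def hGPr)
    hence "char (density lborel (\<lambda>y. ennreal (p y))) t = (CLINT y|lborel. hGP \<sigma> a z y * iexp (t * y)) / complex_of_real I"
      by (simp add: density_rd(2)[OF pp])
    also have "\<dots> = F_GP \<sigma> a z t"
      unfolding fchar(2)[OF s a(1) z(1)] F_GP_def f0 I_def ..
    finally show "char (density lborel (\<lambda>y. ennreal (p y))) t = F_GP \<sigma> a z t" .
  qed
  show ?thesis unfolding dens
  proof (intro conjI allI impI)
    fix y show "0 \<le> P_GP \<sigma> a z y" using pp(2)[of y] P[of y] by simp
  next
    show "real_distribution (density lborel (\<lambda>y. ennreal (p y)))" by (rule rd)
  next
    show "char (density lborel (\<lambda>y. ennreal (p y))) = F_GP \<sigma> a z" by (rule ch)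
  next
    fix \<mu> assume H: "real_distribution \<mu> \<and> char \<mu> = F_GP \<sigma> a z"
    show "\<mu> = density lborel (\<lambda>y. ennreal (p y))"
      by (rule Levy_uniqueness[OF _ rd]) (use H ch in auto)
  qed
qed

lemma nonreal:
  assumes a: "0 < a" and z: "cmod z \<le> 1" and nz: "z \<notin> \<real>"
    and mu: "real_distribution \<mu>" "char \<mu> = F_GP 2 a z"
  shows False
proof -
  have s: "(1::real) < 2" by simp
  define f0 where "f0 = f_GP 2 a z 0"
  have f0ne: "f0 \<noteq> 0"
  proof
    assume "f0 = 0"
    hence "char \<mu> 0 = 0" using mu(2) by (simp add: F_GP_def f0_def)
    thus False using real_distribution.char_zero[OF mu(1)] by simp
  qed
  define g where "g = (\<lambda>y. hGP 2 a z y / f0)"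
  have geq: "(\<lambda>y. g y * iexp (t * y)) = (\<lambda>y. hGP 2 a z y * iexp (t * y) / f0)" for t
    by (auto simp: g_def fun_eq_iff)
  have gi: "integrable lborel (\<lambda>y. g y * iexp (t * y))" for t
    unfolding geq using fchar(1)[OF s a z, of t] by (rule integrable_divide_zero)
  have gc: "char \<mu> t = (CLINT y|lborel. g y * iexp (t * y))" for t
    unfolding geq using fchar(2)[OF s a z, of t] mu(2) by (simp add: F_GP_def f0_def)
  have cj: "(CLINT y|lborel. g y * iexp (t * y)) = (CLINT y|lborel. cnj (g y) * iexp (t * y))" for t
  proof -
    have ce: "cnj (iexp ((- t) * y)) = iexp (t * y)" for y by (simp add: exp_cnj)
    have "(CLINT y|lborel. g y * iexp (t * y)) = char \<mu> t" using gc by simp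
    also have "\<dots> = cnj (char \<mu> (- t))"
      unfolding char_def Bochner_Integration.integral_cnj[symmetric] ce ..
    also have "\<dots> = (CLINT y|lborel. cnj (g y) * iexp (t * y))"
      unfolding gc[of "-t"] Bochner_Integration.integral_cnj[symmetric] complex_cnj_mult ce ..
    finally show ?thesis .
  qed
  define v where "v = (\<lambda>y. Im (g y))"
  have gi0: "integrable lborel g" using gi[of 0] by simp
  have vi: "integrable lborel v" unfolding v_def using gi0 by auto
  have vF: "(CLINT y|lborel. complex_of_real (v y) * iexp (t * y)) = 0" for t
  proof -
    have "(\<lambda>y. complex_of_real (v y) * iexp (t * y)) = (\<lambda>y. (g y * iexp (t * y) - cnj (g y) * iexp (t * y)) / (2 * \<i>))"
    proof
      fix y
      have "g y * iexp (t * y) - cnj (g y) * iexp (t * y) = (g y - cnj (g y)) * iexp (t * y)"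
        by (simp only: left_diff_distrib)
      also have "\<dots> = (2 * \<i>) * (complex_of_real (v y) * iexp (t * y))"
        unfolding complex_diff_cnj v_def by simp
      finally show "complex_of_real (v y) * iexp (t * y) = (g y * iexp (t * y) - cnj (g y) * iexp (t * y)) / (2 * \<i>)"
        by simp
    qed
    hence e1: "(CLINT y|lborel. complex_of_real (v y) * iexp (t * y))
        = (CLINT y|lborel. (g y * iexp (t * y) - cnj (g y) * iexp (t * y))) / (2 * \<i>)"
      by (simp only: integral_divide_zero)
    have e2: "(CLINT y|lborel. (g y * iexp (t * y) - cnj (g y) * iexp (t * y)))
        = (CLINT y|lborel. g y * iexp (t * y)) - (CLINT y|lborel. cnj (g y) * iexp (t * y))"
    proof -
      have fe: "(\<lambda>y. cnj (g y * iexp ((-t) * y))) = (\<lambda>y. cnj (g y) * iexp (t * y))"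
        by (simp add: fun_eq_iff exp_cnj)
      have ci: "integrable lborel (\<lambda>y. cnj (g y) * iexp (t * y))"
        unfolding fe[symmetric] using gi[of "-t"] by (rule integrable_cnj)
      show ?thesis by (rule Bochner_Integration.integral_diff[OF gi ci])
    qed
    show ?thesis using e1 e2 cj[of t] by simp
  qed
  have ae: "AE y in lborel. v y = 0" by (rule zero_fourier[OF vi vF])
  obtain y1 where y1: "v y1 = 0" using ae_ex[OF ae] by blast
  have "AE y in lborel. v y = 0 \<and> y \<noteq> y1" using ae AE_lborel_singleton[of y1] by eventually_elim auto
  then obtain y2 where y2: "v y2 = 0" "y2 \<noteq> y1" using ae_ex by blast
  have zE: "complex_of_real E \<noteq> z" for E using nz by auto
  have vv: "v y = Im (complex_of_real (exp (2 * y) * exp ((1 - a) * exp y)) / (complex_of_real (exp (exp y)) - z) / f0)" for y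
    by (simp add: v_def g_def hGP_def)
  have "exp (exp y2) \<noteq> exp (exp y1)" using y2(2) by simp
  hence "z \<in> \<real>"
    by (intro alg[of "exp (2 * y1) * exp ((1 - a) * exp y1)" "exp (2 * y2) * exp ((1 - a) * exp y2)" "exp (exp y1)" "exp (exp y2)" f0 z])
       (use f0ne zE y1 y2(1) vv in auto)
  thus False using nz by simp
qed

theorem proposition2p1:
  fixes a :: real and z :: complex
  assumes "0 < a" and "a \<le> 1" and "0 < cmod z" and "cmod z \<le> 1"
  shows "((\<forall>\<sigma>>1. \<exists>\<mu>. real_distribution \<mu> \<and> char \<mu> = F_GP \<sigma> a z)
            \<longleftrightarrow> z \<in> \<real>)
       \<and> (z \<in> \<real> \<longrightarrow> (\<forall>\<sigma>>1.
            (\<forall>y. 0 \<le> P_GP \<sigma> a z y)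
          \<and> real_distribution (density lborel (\<lambda>y. ennreal (P_GP \<sigma> a z y)))
          \<and> char (density lborel (\<lambda>y. ennreal (P_GP \<sigma> a z y))) = F_GP \<sigma> a z
          \<and> (\<forall>\<mu>. real_distribution \<mu> \<and> char \<mu> = F_GP \<sigma> a z
                 \<longrightarrow> \<mu> = density lborel (\<lambda>y. ennreal (P_GP \<sigma> a z y)))))"
proof -
  have R: "z \<in> \<real> \<Longrightarrow> 1 < \<sigma> \<Longrightarrow> (\<forall>y. 0 \<le> P_GP \<sigma> a z y) \<and> real_distribution (density lborel (\<lambda>y. ennreal (P_GP \<sigma> a z y)))
          \<and> char (density lborel (\<lambda>y. ennreal (P_GP \<sigma> a z y))) = F_GP \<sigma> a z
          \<and> (\<forall>\<mu>. real_distribution \<mu> \<and> char \<mu> = F_GP \<sigma> a z \<longrightarrow> \<mu> = density lborel (\<lambda>y. ennreal (P_GP \<sigma> a z y)))" for \<sigma>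
    using real_case[OF assms(1,2,4)] by blast
  have "(\<forall>\<sigma>>1. \<exists>\<mu>. real_distribution \<mu> \<and> char \<mu> = F_GP \<sigma> a z) \<longleftrightarrow> z \<in> \<real>"
  proof
    assume H: "\<forall>\<sigma>>1. \<exists>\<mu>. real_distribution \<mu> \<and> char \<mu> = F_GP \<sigma> a z"
    show "z \<in> \<real>"
    proof (rule ccontr)
      assume nz: "z \<notin> \<real>"
      from H obtain \<mu> where "real_distribution \<mu>" "char \<mu> = F_GP 2 a z" by force
      thus False using nonreal[OF assms(1) assms(4) nz] by blast
    qed
  next
    assume "z \<in> \<real>"
    thus "\<forall>\<sigma>>1. \<exists>\<mu>. real_distribution \<mu> \<and> char \<mu> = F_GP \<sigma> a z" using R by blast
  qed
  thus ?thesis using R by blast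
qed

end
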